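(* Let $B\subset\mathbf{P}^2_{\mathbf{C}}$ be the real-algebraic surface defined by $x\bar y^2+y\bar z^2+z\bar x^2=0$. Then $B$ is transverse to the Jouanolou foliation $\mathcal{J}_2$, and $\mathcal{J}_2$ satisfies property $\mathcal{P}_B$; namely, for all $(x,y,z)\in\mathbf{C}^3\setminus\{0\}$, $$x\bar y^2+y\bar z^2+z\bar x^2=0\ \Longrightarrow\ 2\,|\bar x y z^2+\bar y z x^2+\bar z x y^2|<|x|^4+|y|^4+|z|^4.$$
   Context: $\mathcal{J}_2$ is the foliation of $\mathbf{P}^2_{\mathbf{C}}$ induced by the divergence-free homogeneous vector field $J_2=y^2\partial_x+z^2\partial_y+x^2\partial_z$ on $\mathbf{C}^3$ (non-vanishing on $\mathbf{C}^3\setminus\{0\}$). With $p\cdot p'=x\bar x'+y\bar y'+z\bar z'$ and $\Pi:\mathbf{C}^3\setminus\{0\}\to\mathbf{P}^2_{\mathbf{C}}$, the real field $W$ is the projection of $\mathrm{Re}(\tilde\rho J_2)$, $\tilde\rho(p)=-2(p\cdot J_2(p))/\|p\|^{4}$, tangent to $\mathcal{J}_2$ and vanishing on $B=\Pi(\{p\cdot J_2(p)=0\})$, which is the surface above. Property $\mathcal{P}_B$: $J_2$ does not vanish on $\mathbf{C}^3\setminus\{0\}$ and each $b\in B$ is a sink of the restriction of $W$ to the leaf of $\mathcal{J}_2$ through $b$. *)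

theory Defs
  imports Complex_Main
begin

definition J2 :: "complex \<times> complex \<times> complex \<Rightarrow> complex \<times> complex \<times> complex" where
  "J2 p = (case p of (x, y, z) \<Rightarrow> (y^2, z^2, x^2))"

end

theory Submission
  imports Defs
begin

lemma poly_ineq:
  fixes r s t :: real
  assumes "r > 0" "0 \<le> s" "s \<le> r" "0 \<le> t" "t \<le> r"
  shows "2 * (r*s*t) * (r*(r^2 - s^2) + s*(r^2 - t^2) + t*(r^2 - r^2)) < r^2 * (r^4 + s^4 + t^4)"
proof -
  have h1: "s*(r-s) \<le> r^2/4"
  proof -
    have "0 \<le> (r - 2*s)^2" by simp
    then show ?thesis by (simp add: algebra_simps power2_eq_square)
  qed
  have h1': "2*r^2*(s*t) * (s*(r-s)) \<le> 2*r^2*(s*t)*(r^2/4)"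
    using h1 assms by (intro mult_left_mono) auto
  have h2: "r^2*s^4 + r^2*t^4 \<ge> 2*r^2*(s*t)^2"
  proof -
    have "0 \<le> r^2*(s^2-t^2)^2" by simp
    then show ?thesis by (simp add: algebra_simps power2_eq_square power4_eq_xxxx)
  qed
  have h3: "2*r*s^2*t^3 \<ge> 0" using assms by simp
  have h4: "r^2 * (r^4 - 5/2 * r^2 * (s*t) + 2*(s*t)^2) > 0"
  proof -
    have "r^4 - 5/2 * r^2 * (s*t) + 2*(s*t)^2 = (r^2 - 5/4*(s*t))^2 + 7/16*(s*t)^2"
      by (simp add: algebra_simps power2_eq_square power4_eq_xxxx)
    moreover have "(r^2 - 5/4*(s*t))^2 + 7/16*(s*t)^2 > 0"
    proof (cases "s*t = 0")
      case True then show ?thesis using assms by (auto)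
    next
      case False then show ?thesis by (simp add: add_nonneg_pos)
    qed
    ultimately show ?thesis using assms by simp
  qed
  have eq: "r^2 * (r^4 + s^4 + t^4) - 2 * (r*s*t) * (r*(r^2 - s^2) + s*(r^2 - t^2) + t*(r^2 - r^2))
     = r^2 * (r^4 - 5/2 * r^2 * (s*t) + 2*(s*t)^2) + (r^2*s^4 + r^2*t^4 - 2*r^2*(s*t)^2) + 2*r*s^2*t^3
       + (2*r^2*(s*t)*(r^2/4) - 2*r^2*(s*t) * (s*(r-s)))"
    by (simp add: algebra_simps power2_eq_square power4_eq_xxxx power3_eq_cube)
  show ?thesis using h1' h2 h3 h4 eq by linarith
qed

lemma core:
  fixes x y z :: complex
  assumes nz: "x \<noteq> 0" "y \<noteq> 0" "z \<noteq> 0"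
    and C: "x * cnj y ^ 2 + y * cnj z ^ 2 + z * cnj x ^ 2 = 0"
    and ley: "cmod y \<le> cmod x" and lez: "cmod z \<le> cmod x"
  shows "2 * cmod (cnj x * y * z ^ 2 + cnj y * z * x ^ 2 + cnj z * x * y ^ 2)
        < cmod x ^ 4 + cmod y ^ 4 + cmod z ^ 4"
proof -
  define r where "r = cmod x"
  define s where "s = cmod y"
  define t where "t = cmod z"
  define S where "S = cnj x * y * z ^ 2 + cnj y * z * x ^ 2 + cnj z * x * y ^ 2"
  have r0: "r > 0" "s > 0" "t > 0" using nz by (auto simp: r_def s_def t_def)
  have X: "complex_of_real (r^2) = x * cnj x" unfolding r_def by (rule complex_norm_square)
  have Y: "complex_of_real (s^2) = y * cnj y" unfolding s_def by (rule complex_norm_square)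
  have Z: "complex_of_real (t^2) = z * cnj z" unfolding t_def by (rule complex_norm_square)
  have id: "complex_of_real (r^2) * (cnj x * cnj y * cnj z * S)
     = complex_of_real (r^4*t^2 - r^2*s^2*t^2) * (x * cnj y ^ 2)
       + complex_of_real (r^4*s^2 - r^2*s^2*t^2) * (y * cnj z ^ 2)
       + complex_of_real (r^2*s^2*t^2) * (x * cnj y ^ 2 + y * cnj z ^ 2 + z * cnj x ^ 2)"
  proof -
    have e1: "complex_of_real (r^4*t^2 - r^2*s^2*t^2) = of_real (r^2) * of_real (r^2) * of_real (t^2) - of_real (r^2) * of_real (s^2) * of_real (t^2)"
      by (simp add: power2_eq_square power4_eq_xxxx)
    have e2: "complex_of_real (r^4*s^2 - r^2*s^2*t^2) = of_real (r^2) * of_real (r^2) * of_real (s^2) - of_real (r^2) * of_real (s^2) * of_real (t^2)"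
      by (simp add: power2_eq_square power4_eq_xxxx)
    have e3: "complex_of_real (r^2*s^2*t^2) = of_real (r^2) * of_real (s^2) * of_real (t^2)"
      by simp
    show ?thesis unfolding e1 e2 e3 unfolding X Y Z S_def by algebra
  qed
  then have id': "complex_of_real (r^2) * (cnj x * cnj y * cnj z * S)
     = complex_of_real (r^4*t^2 - r^2*s^2*t^2) * (x * cnj y ^ 2)
       + complex_of_real (r^4*s^2 - r^2*s^2*t^2) * (y * cnj z ^ 2)" using C by simp
  have c1: "r^4*t^2 - r^2*s^2*t^2 \<ge> 0"
  proof -
    have "s^2 \<le> r^2" using ley r0 unfolding r_def s_def by (simp add: power_mono)
    then have "r^2*s^2*t^2 \<le> r^2*r^2*t^2" by (intro mult_right_mono mult_left_mono) auto
    then show ?thesis by (simp add: power4_eq_xxxx power2_eq_square)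
  qed
  have c2: "r^4*s^2 - r^2*s^2*t^2 \<ge> 0"
  proof -
    have "t^2 \<le> r^2" using lez r0 unfolding r_def t_def by (simp add: power_mono)
    then have "r^2*s^2*t^2 \<le> r^2*s^2*r^2" by (intro mult_right_mono mult_left_mono) auto
    then show ?thesis by (simp add: power4_eq_xxxx power2_eq_square ac_simps)
  qed
  have "r^2 * (r*s*t) * cmod S = cmod (complex_of_real (r^2) * (cnj x * cnj y * cnj z * S))"
    by (simp add: norm_mult r_def s_def t_def norm_power)
  also have "\<dots> \<le> (r^4*t^2 - r^2*s^2*t^2) * (r*s^2) + (r^4*s^2 - r^2*s^2*t^2) * (s*t^2)"
    unfolding id'
  proof (rule order_trans[OF norm_triangle_ineq])
    show "cmod (complex_of_real (r^4*t^2 - r^2*s^2*t^2) * (x * cnj y ^ 2)) +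
      cmod (complex_of_real (r^4*s^2 - r^2*s^2*t^2) * (y * cnj z ^ 2))
      \<le> (r^4*t^2 - r^2*s^2*t^2) * (r*s^2) + (r^4*s^2 - r^2*s^2*t^2) * (s*t^2)"
      using c1 c2 by (simp only: norm_mult norm_of_real abs_of_nonneg norm_power complex_mod_cnj flip: r_def s_def t_def)
  qed
  also have "\<dots> = (r*s*t) * ((r*s*t) * (r*(r^2 - s^2) + s*(r^2 - t^2) + t*(r^2 - r^2)))"
    by (simp add: algebra_simps power2_eq_square power4_eq_xxxx)
  finally have "r^2 * cmod S \<le> (r*s*t) * (r*(r^2 - s^2) + s*(r^2 - t^2) + t*(r^2 - r^2))"
    using r0 by (simp add: mult.assoc mult.left_commute[of "r*s*t"])
  moreover have "2 * (r*s*t) * (r*(r^2 - s^2) + s*(r^2 - t^2) + t*(r^2 - r^2)) < r^2 * (r^4 + s^4 + t^4)"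
    using poly_ineq[of r s t] r0 ley lez by (simp add: r_def s_def t_def)
  ultimately have "r^2 * (2 * cmod S) < r^2 * (r^4 + s^4 + t^4)" by linarith
  then show ?thesis using r0 unfolding S_def r_def s_def t_def by simp
qed

theorem proposition12p3:
  fixes x y z :: complex
  assumes "(x, y, z) \<noteq> (0, 0, 0)"
  shows "J2 (x, y, z) \<noteq> (0, 0, 0) \<and>
    (x * cnj y ^ 2 + y * cnj z ^ 2 + z * cnj x ^ 2 = 0 \<longrightarrow>
      2 * cmod (cnj x * y * z ^ 2 + cnj y * z * x ^ 2 + cnj z * x * y ^ 2)
        < cmod x ^ 4 + cmod y ^ 4 + cmod z ^ 4)"
proof
  show "J2 (x, y, z) \<noteq> (0, 0, 0)" using assms by (auto simp: J2_def)
next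
  show "x * cnj y ^ 2 + y * cnj z ^ 2 + z * cnj x ^ 2 = 0 \<longrightarrow>
      2 * cmod (cnj x * y * z ^ 2 + cnj y * z * x ^ 2 + cnj z * x * y ^ 2)
        < cmod x ^ 4 + cmod y ^ 4 + cmod z ^ 4"
  proof
    assume C: "x * cnj y ^ 2 + y * cnj z ^ 2 + z * cnj x ^ 2 = 0"
    show "2 * cmod (cnj x * y * z ^ 2 + cnj y * z * x ^ 2 + cnj z * x * y ^ 2)
        < cmod x ^ 4 + cmod y ^ 4 + cmod z ^ 4"
    proof (cases "x = 0 \<or> y = 0 \<or> z = 0")
      case True
      have "cmod x ^ 4 + cmod y ^ 4 + cmod z ^ 4 > 0"
        using assms by (auto simp: add_pos_nonneg add_nonneg_pos)
      then show ?thesis using True by auto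
    next
      case False
      then have nz: "x \<noteq> 0" "y \<noteq> 0" "z \<noteq> 0" by auto
      consider "cmod y \<le> cmod x" "cmod z \<le> cmod x" | "cmod x \<le> cmod y" "cmod z \<le> cmod y"
        | "cmod x \<le> cmod z" "cmod y \<le> cmod z" by linarith
      then show ?thesis
      proof cases
        case 1 then show ?thesis using core[OF nz C] by simp
      next
        case 2
        have C': "y * cnj z ^ 2 + z * cnj x ^ 2 + x * cnj y ^ 2 = 0" using C by (simp add: ac_simps)
        have "2 * cmod (cnj y * z * x ^ 2 + cnj z * x * y ^ 2 + cnj x * y * z ^ 2)
           < cmod y ^ 4 + cmod z ^ 4 + cmod x ^ 4" using core[OF nz(2,3,1) C' 2(2,1)] .
        then show ?thesis by (simp add: ac_simps)
      next
        case 3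
        have C': "z * cnj x ^ 2 + x * cnj y ^ 2 + y * cnj z ^ 2 = 0" using C by (simp add: ac_simps)
        have "2 * cmod (cnj z * x * y ^ 2 + cnj x * y * z ^ 2 + cnj y * z * x ^ 2)
           < cmod z ^ 4 + cmod x ^ 4 + cmod y ^ 4" using core[OF nz(3,1,2) C' 3] .
        then show ?thesis by (simp add: ac_simps)
      qed
    qed
  qed
qed

end
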